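(* Let $U\subsetneq(0,\pi)$ be an open set. Then for every $\varepsilon>0$ there exists $M=M(\varepsilon)>0$ such that for any $A\in SL_2(\mathbb R)$ satisfying $\varphi_A(U)\subset U$ and $\|A\|>M$, we have $(t_A-\varepsilon,t_A+\varepsilon)\not\subset U$.
   Context: $\mathbb{RP}^1$ is identified with $[0,\pi)\cong\mathbb R/\pi\mathbb Z$ (angle $\theta$ corresponds to the line through $(\cos\theta,\sin\theta)$), and $\varphi_A$ is the induced action of $A$ on it. For $A\in SL_2(\mathbb R)$, $t_A\in[0,\pi)$ is defined by: $(\cos t_A,\sin t_A)^{\mathrm t}$ is a unit eigenvector of $A^*A$ for its eigenvalue $\|A\|^{-2}$. *)

theory Defs
  imports "HOL-Analysis.Analysis"
begin

text \<open>Unit vector representing the angle theta in RP^1 = [0,pi).\<close>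
definition dirvec :: "real \<Rightarrow> real^2" where
  "dirvec t = vector [cos t, sin t]"

definition opnorm :: "real^2^2 \<Rightarrow> real" where
  "opnorm A = onorm (\<lambda>x. A *v x)"

definition phiA :: "real^2^2 \<Rightarrow> real \<Rightarrow> real" where
  "phiA A \<theta> = (THE s. s \<in> {0..<pi} \<and> (\<exists>c. c \<noteq> 0 \<and> A *v dirvec \<theta> = c *\<^sub>R dirvec s))"

definition is_tA :: "real^2^2 \<Rightarrow> real \<Rightarrow> bool" where
  "is_tA A t \<longleftrightarrow> t \<in> {0..<pi} \<and>
     (transpose A ** A) *v dirvec t = (inverse (opnorm A ^ 2)) *\<^sub>R dirvec t"

end

theory Submission imports Defs begin

lemma vec2_eq: "(v::real^2) = w \<longleftrightarrow> v$1 = w$1 \<and> v$2 = w$2"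
  by (metis (mono_tags) exhaust_2 vec_eq_iff)

lemma mv2: "(A::real^2^2) *v vector [x1, x2] = vector [A$1$1*x1 + A$1$2*x2, A$2$1*x1+A$2$2*x2]"
  by (simp add: vec2_eq matrix_vector_mult_def sum_2)

lemma tAA2: "(transpose (A::real^2^2) ** A) *v vector [x1, x2] =
   vector [A$1$1*(A$1$1*x1 + A$1$2*x2) + A$2$1*(A$2$1*x1+A$2$2*x2),
           A$1$2*(A$1$1*x1 + A$1$2*x2) + A$2$2*(A$2$1*x1+A$2$2*x2)]"
  by (simp add: vec2_eq matrix_vector_mult_def matrix_matrix_mult_def transpose_def sum_2 algebra_simps)

lemma scale2: "c *\<^sub>R vector [x1, x2] = (vector [c*x1, c*x2] :: real^2)"
  by (simp add: vec2_eq)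


lemma dirvec_unique:
  assumes "s \<in> {0..<pi}" "s' \<in> {0..<pi}" "dirvec s = r *\<^sub>R dirvec s'"
  shows "s = s'"
proof -
  have c: "cos s = r * cos s'" and sn: "sin s = r * sin s'"
    using assms(3) by (simp_all add: dirvec_def vec2_eq scale2)
  have "1 = (cos s)^2 + (sin s)^2" by simp
  also have "\<dots> = r^2 * ((cos s')^2 + (sin s')^2)" unfolding c sn by (simp only: power_mult_distrib distrib_left)
  also have "\<dots> = r^2" by simp
  finally have "r^2 = 1" by simp
  hence r: "r = 1 \<or> r = -1" by (simp add: power2_eq_1_iff)
  have s0: "0 \<le> s" "s \<le> pi" "0 \<le> s'" "s' \<le> pi" using assms(1,2) by auto
  show ?thesis
  proof (cases "r = 1")
    case True
    hence "cos s = cos s'" using c by simp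
    thus ?thesis using s0 cos_inj_pi by blast
  next
    case False
    hence r1: "r = -1" using r by blast
    have "sin s \<ge> 0" using sin_ge_zero s0 by blast
    moreover have "sin s' \<ge> 0" using sin_ge_zero s0 by blast
    ultimately have z: "sin s = 0" using sn unfolding r1 by linarith
    have "s < pi" using assms(1) by simp
    hence "s = 0" using z s0 sin_zero_pi_iff by (metis abs_of_nonneg)
    have z': "sin s' = 0" using z sn r1 by simp
    have "s' < pi" using assms(2) by simp
    hence "s' = 0" using z' s0 sin_zero_pi_iff by (metis abs_of_nonneg)
    thus ?thesis using \<open>s = 0\<close> by simp
  qed
qed

lemma phiA_eq:
  assumes "q \<in> {0..<pi}" "c \<noteq> 0" "A *v dirvec th = c *\<^sub>R dirvec q"
  shows "phiA A th = q"
  unfolding phiA_def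
proof (rule the_equality)
  show "q \<in> {0..<pi} \<and> (\<exists>c. c \<noteq> 0 \<and> A *v dirvec th = c *\<^sub>R dirvec q)" using assms by blast
next
  fix s assume "s \<in> {0..<pi} \<and> (\<exists>c. c \<noteq> 0 \<and> A *v dirvec th = c *\<^sub>R dirvec s)"
  then obtain c' where s: "s \<in> {0..<pi}" "c' \<noteq> 0" "A *v dirvec th = c' *\<^sub>R dirvec s" by blast
  hence "c' *\<^sub>R dirvec s = c *\<^sub>R dirvec q" using assms by simp
  hence "inverse c' *\<^sub>R (c' *\<^sub>R dirvec s) = inverse c' *\<^sub>R (c *\<^sub>R dirvec q)" by simp
  hence "dirvec s = (inverse c' * c) *\<^sub>R dirvec q" using s(2) by simp
  thus "s = q" using dirvec_unique s(1) assms(1) by blast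
qed


lemma core_alg:
  fixes x y sg w1 w2 cs ss :: real
  assumes "x^2 + y^2 = 1" "sg > 0" "w1 * x + w2 * y \<noteq> 0"
    "ss = cs * ((- w1 * y + w2 * x) / ((w1 * x + w2 * y) * sg^2))"
  shows "cs * x / sg - ss * sg * y = (cs / ((w1 * x + w2 * y) * sg)) * w1"
    and "cs * y / sg + ss * sg * x = (cs / ((w1 * x + w2 * y) * sg)) * w2"
proof -
  define al where "al = w1 * x + w2 * y"
  define be where "be = - w1 * y + w2 * x"
  have al0: "al \<noteq> 0" using assms(3) al_def by simp
  have e1: "al * x - be * y = w1"
  proof -
    have "al * x - be * y = w1 * (x^2 + y^2)" unfolding al_def be_def by (simp add: algebra_simps power2_eq_square)
    thus ?thesis using assms(1) by simp
  qed
  have e2: "al * y + be * x = w2"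
  proof -
    have "al * y + be * x = w2 * (x^2 + y^2)" unfolding al_def be_def by (simp add: algebra_simps power2_eq_square)
    thus ?thesis using assms(1) by simp
  qed
  have ss: "ss = cs * (be / (al * sg^2))" using assms(4) al_def be_def by simp
  have "cs * x / sg - ss * sg * y = (cs / (al * sg)) * (al * x - be * y)"
    unfolding ss using al0 assms(2) by (simp add: field_simps power2_eq_square)
  thus "cs * x / sg - ss * sg * y = (cs / ((w1 * x + w2 * y) * sg)) * w1"
    by (simp only: e1 al_def[symmetric])
  have "cs * y / sg + ss * sg * x = (cs / (al * sg)) * (al * y + be * x)"
    unfolding ss using al0 assms(2) by (simp add: field_simps power2_eq_square)
  thus "cs * y / sg + ss * sg * x = (cs / ((w1 * x + w2 * y) * sg)) * w2"
    by (simp only: e2 al_def[symmetric])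
qed


lemma tA_facts:
  fixes A :: "real^2^2"
  assumes "det A = 1" "is_tA A t" "opnorm A > 0"
  defines "p1 \<equiv> A$1$1 * cos t + A$1$2 * sin t"
    and "p2 \<equiv> A$2$1 * cos t + A$2$2 * sin t"
    and "q1 \<equiv> - A$1$1 * sin t + A$1$2 * cos t"
    and "q2 \<equiv> - A$2$1 * sin t + A$2$2 * cos t"
    and "sg \<equiv> opnorm A"
  shows "(sg*p1)^2 + (sg*p2)^2 = 1" "q1 = - sg * (sg*p2)" "q2 = sg*(sg*p1)"
proof -
  define a where "a = A$1$1"
  define b where "b = A$1$2"
  define c where "c = A$2$1"
  define d where "d = A$2$2"
  define ct where "ct = cos t"
  define st where "st = sin t"
  define k where "k = inverse (sg^2)"
  have sg0: "sg > 0" using assms(3) sg_def by simp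
  have cs: "ct^2 + st^2 = 1" unfolding ct_def st_def by simp
  have det: "a * d - b * c = 1" using assms(1) unfolding a_def b_def c_def d_def det_2 by simp
  have ev: "(transpose A ** A) *v dirvec t = k *\<^sub>R dirvec t"
    using assms(2) unfolding is_tA_def k_def sg_def by simp
  have eA: "a * p1 + c * p2 = k * ct" "b * p1 + d * p2 = k * st"
    using ev unfolding dirvec_def tAA2 scale2 vec2_eq p1_def p2_def a_def b_def c_def d_def ct_def st_def
    by simp_all
  have P1: "p1 = a * ct + b * st" "p2 = c * ct + d * st" "q1 = - a * st + b * ct" "q2 = - c * st + d * ct"
    unfolding p1_def p2_def q1_def q2_def a_def b_def c_def d_def ct_def st_def by simp_all
  have F1: "p1^2 + p2^2 = k"
  proof -
    have "p1^2 + p2^2 = ct * (a * p1 + c * p2) + st * (b * p1 + d * p2)"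
      unfolding P1(1,2) by (simp add: algebra_simps power2_eq_square)
    also have "\<dots> = k * (ct^2 + st^2)" unfolding eA by (simp add: algebra_simps power2_eq_square)
    finally show ?thesis using cs by simp
  qed
  have F2: "p1 * q1 + p2 * q2 = 0"
  proof -
    have "p1 * q1 + p2 * q2 = - st * (a * p1 + c * p2) + ct * (b * p1 + d * p2)"
      unfolding P1(3,4) by (simp add: algebra_simps)
    also have "\<dots> = 0" unfolding eA by (simp add: algebra_simps)
    finally show ?thesis .
  qed
  have F3: "p1 * q2 - p2 * q1 = 1"
  proof -
    have "p1 * q2 - p2 * q1 = (a * d - b * c) * (ct^2 + st^2)"
      unfolding P1 by (simp add: algebra_simps power2_eq_square)
    thus ?thesis using det cs by simp
  qed
  have F4: "q1 * k = - p2" "q2 * k = p1"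
  proof -
    have "q1 * (p1^2 + p2^2) = p1 * (p1 * q1 + p2 * q2) - p2 * (p1 * q2 - p2 * q1)"
      by (simp add: algebra_simps power2_eq_square)
    thus "q1 * k = - p2" using F1 F2 F3 by simp
    have "q2 * (p1^2 + p2^2) = p2 * (p1 * q1 + p2 * q2) + p1 * (p1 * q2 - p2 * q1)"
      by (simp add: algebra_simps power2_eq_square)
    thus "q2 * k = p1" using F1 F2 F3 by simp
  qed
  have ksg: "k * sg^2 = 1" unfolding k_def using sg0 by simp
  show "(sg*p1)^2 + (sg*p2)^2 = 1"
  proof -
    have "(sg*p1)^2 + (sg*p2)^2 = sg^2 * (p1^2 + p2^2)" by (simp add: algebra_simps power2_eq_square)
    thus ?thesis using F1 ksg by (simp add: mult.commute)
  qed
  show "q1 = - sg * (sg*p2)"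
  proof -
    have "q1 = q1 * (k * sg^2)" using ksg by simp
    also have "\<dots> = - p2 * sg^2" using F4(1) by (metis mult.assoc)
    finally show ?thesis by (simp add: power2_eq_square)
  qed
  show "q2 = sg * (sg*p1)"
  proof -
    have "q2 = q2 * (k * sg^2)" using ksg by simp
    also have "\<dots> = p1 * sg^2" using F4(2) by (metis mult.assoc)
    finally show ?thesis by (simp add: power2_eq_square)
  qed
qed


lemma Avt: "(A::real^2^2) *v dirvec (t + s) = vector [cos s * (A$1$1 * cos t + A$1$2 * sin t) + sin s * (- A$1$1 * sin t + A$1$2 * cos t),
   cos s * (A$2$1 * cos t + A$2$2 * sin t) + sin s * (- A$2$1 * sin t + A$2$2 * cos t)]"
  unfolding dirvec_def mv2 cos_add sin_add vec2_eq vector_2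
  by (simp add: algebra_simps)


lemma lagr: "((c::real) * x + s * y)^2 + (- c * y + s * x)^2 = (c^2 + s^2) * (x^2 + y^2)"
  by (simp add: power2_eq_square algebra_simps)

lemma preimage_exists:
  fixes A :: "real^2^2"
  assumes "det A = 1" "is_tA A t" "opnorm A > 0" "q \<in> {0..<pi}"
  defines "x \<equiv> opnorm A * (A$1$1 * cos t + A$1$2 * sin t)"
    and "y \<equiv> opnorm A * (A$2$1 * cos t + A$2$2 * sin t)"
  assumes al0: "cos q * x + sin q * y \<noteq> 0"
  shows "\<exists>s. \<bar>s\<bar> \<le> 1 / (\<bar>cos q * x + sin q * y\<bar> * (opnorm A)^2) \<and> phiA A (t + s) = q"
proof -
  define sg where "sg = opnorm A"
  define al where "al = cos q * x + sin q * y"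
  define be where "be = - cos q * y + sin q * x"
  define p1 where "p1 = A$1$1 * cos t + A$1$2 * sin t"
  define p2 where "p2 = A$2$1 * cos t + A$2$2 * sin t"
  define q1 where "q1 = - A$1$1 * sin t + A$1$2 * cos t"
  define q2 where "q2 = - A$2$1 * sin t + A$2$2 * cos t"
  have sg0: "sg > 0" using assms(3) sg_def by simp
  note TF = tA_facts[OF assms(1,2,3)]
  have xy: "x^2 + y^2 = 1" using TF(1) unfolding x_def y_def .
  have Q1: "q1 = - sg * y" using TF(2) unfolding q1_def sg_def y_def .
  have Q2: "q2 = sg * x" using TF(3) unfolding q2_def sg_def x_def .
  have P1: "p1 = x / sg" "p2 = y / sg"
    unfolding p1_def p2_def x_def y_def sg_def[symmetric] using sg0 by simp_all
  have ab: "al^2 + be^2 = 1"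
  proof -
    have "al^2 + be^2 = ((cos q)^2 + (sin q)^2) * (x^2 + y^2)"
      unfolding al_def be_def by (rule lagr)
    thus ?thesis using xy by simp
  qed
  hence "be^2 \<le> 1" using zero_le_power2[of al] by linarith
  hence be1: "\<bar>be\<bar> \<le> 1" by (simp add: abs_square_le_1)
  have al0': "al \<noteq> 0" using al0 al_def by simp
  define s where "s = arctan (be / (al * sg^2))"
  define cs where "cs = cos s"
  define ss where "ss = sin s"
  have cs0: "cs \<noteq> 0" unfolding cs_def s_def by simp
  have ss: "ss = cs * (be / (al * sg^2))"
  proof -
    have "tan s = be / (al * sg^2)" unfolding s_def by (rule tan_arctan)
    hence "sin s / cos s = be / (al * sg^2)" unfolding tan_def .
    hence "sin s = (be / (al * sg^2)) * cos s" using cs0 unfolding cs_def by (simp add: divide_eq_eq)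
    thus ?thesis unfolding ss_def cs_def by simp
  qed
  have sbound: "\<bar>s\<bar> \<le> 1 / (\<bar>al\<bar> * sg^2)"
  proof -
    have "\<bar>s\<bar> \<le> \<bar>be / (al * sg^2)\<bar>" unfolding s_def by (rule abs_arctan_le)
    also have "\<dots> = \<bar>be\<bar> / (\<bar>al\<bar> * sg^2)" by (simp add: abs_mult)
    also have "\<dots> \<le> 1 / (\<bar>al\<bar> * sg^2)" using be1 al0' sg0
      by (intro divide_right_mono) auto
    finally show ?thesis .
  qed
  have Av: "A *v dirvec (t + s) = vector [cs * p1 + ss * q1, cs * p2 + ss * q2]"
    unfolding Avt cs_def ss_def p1_def p2_def q1_def q2_def ..
  have ss': "ss = cs * ((- cos q * y + sin q * x) / ((cos q * x + sin q * y) * sg^2))"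
    using ss unfolding al_def be_def .
  note CA = core_alg[OF xy sg0 al0 ss']
  have "A *v dirvec (t + s) = vector [cs*(x/sg) + ss*(-sg*y), cs*(y/sg) + ss*(sg*x)]"
    unfolding Av Q1 Q2 P1 ..
  also have "\<dots> = (cs / (al * sg)) *\<^sub>R dirvec q"
    unfolding dirvec_def scale2 vec2_eq vector_2 al_def
  proof
    show "cs * (x / sg) + ss * (- sg * y) = cs / ((cos q * x + sin q * y) * sg) * cos q"
      using CA(1) by simp
    show "cs * (y / sg) + ss * (sg * x) = cs / ((cos q * x + sin q * y) * sg) * sin q"
      using CA(2) by simp
  qed
  finally have "A *v dirvec (t + s) = (cs / (al * sg)) *\<^sub>R dirvec q" .
  moreover have "cs / (al * sg) \<noteq> 0" using cs0 al0' sg0 by simp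
  ultimately have "phiA A (t + s) = q" using phiA_eq[OF assms(4)] by blast
  thus ?thesis using sbound unfolding al_def sg_def by blast
qed


theorem lemma3p3:
  fixes U :: "real set"
  assumes "open U" and "U \<subseteq> {0<..<pi}" and "U \<noteq> {0<..<pi}"
  shows "\<forall>\<epsilon>>0. \<exists>M>0. \<forall>(A::real^2^2) t.
           det A = 1 \<and> phiA A ` U \<subseteq> U \<and> opnorm A > M \<and> is_tA A t
           \<longrightarrow> \<not> {t - \<epsilon><..<t + \<epsilon>} \<subseteq> U"
proof (intro allI impI)
  fix ep :: real assume ep: "ep > 0"
  obtain p0 where p0: "p0 \<in> {0<..<pi}" "p0 \<notin> U" using assms(2,3) by blast
  define a0 where "a0 = sin p0 / 4"
  have sp: "sin p0 > 0" using p0 by (auto intro: sin_gt_zero)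
  have a0: "a0 > 0" "a0 \<le> 1/4" using sp sin_le_one[of p0] a0_def by auto
  define M where "M = 1 + 1/(a0*ep)"
  have M0: "M > 0" using a0 ep M_def by (simp add: add_pos_pos)
  show "\<exists>M>0. \<forall>(A::real^2^2) t.
           det A = 1 \<and> phiA A ` U \<subseteq> U \<and> opnorm A > M \<and> is_tA A t
           \<longrightarrow> \<not> {t - ep<..<t + ep} \<subseteq> U"
  proof (intro exI[of _ M] conjI M0 allI impI notI)
    fix A :: "real^2^2" and t
    assume H: "det A = 1 \<and> phiA A ` U \<subseteq> U \<and> opnorm A > M \<and> is_tA A t"
      and I: "{t - ep<..<t + ep} \<subseteq> U"
    define sg where "sg = opnorm A"
    have sgM: "sg > M" using H sg_def by simp
    have iae: "1/(a0*ep) > 0" using a0 ep by simp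
    have sg1: "sg > 1" using sgM M_def iae by linarith
    have sg0: "opnorm A > 0" using sg1 sg_def by simp
    define x where "x = opnorm A * (A$1$1 * cos t + A$1$2 * sin t)"
    define y where "y = opnorm A * (A$2$1 * cos t + A$2$2 * sin t)"
    have xy: "x^2 + y^2 = 1" using tA_facts(1)[of A t] H sg0 unfolding x_def y_def by blast
    have "sg^2 > sg" using sg1 by (simp add: power2_eq_square)
    hence "sg^2 > 1/(a0*ep)" using sgM M_def by linarith
    hence big: "a0 * ep * sg^2 > 1" using a0 ep by (simp add: field_simps)
    have key: "\<exists>q. q \<in> {0..<pi} \<and> q \<notin> U \<and> \<bar>cos q * x + sin q * y\<bar> \<ge> a0"
    proof (cases "\<bar>x\<bar> \<ge> a0")
      case True
      have "0 \<notin> U" using assms(2) by auto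
      thus ?thesis using True by (intro exI[of _ 0]) auto
    next
      case False
      hence xa: "\<bar>x\<bar> < a0" by simp
      have "\<bar>cos p0 * x + sin p0 * y\<bar> \<ge> a0"
      proof (rule ccontr)
        assume "\<not> ?thesis"
        hence al: "\<bar>cos p0 * x + sin p0 * y\<bar> < a0" by simp
        have "\<bar>cos p0 * x\<bar> \<le> \<bar>x\<bar>" using abs_cos_le_one[of p0]
          by (simp add: abs_mult mult_left_le_one_le)
        hence "\<bar>sin p0 * y\<bar> < 2 * a0" using al xa by linarith
        hence "sin p0 * \<bar>y\<bar> < sin p0 * (1/2)" using sp a0_def by (simp add: abs_mult)
        hence yh: "\<bar>y\<bar> < 1/2" using sp by simp
        have "\<bar>y\<bar> * \<bar>y\<bar> < (1/2) * (1/2)"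
          using yh by (intro mult_strict_mono) auto
        hence y2: "y * y < 1/4" unfolding abs_mult_self by simp
        have "\<bar>x\<bar> < 1/4" using xa a0 by linarith
        hence "\<bar>x\<bar> * \<bar>x\<bar> < (1/4) * (1/4)"
          by (intro mult_strict_mono) auto
        hence x2: "x * x < 1/16" unfolding abs_mult_self by simp
        have "x * x + y * y = 1" using xy by (simp add: power2_eq_square)
        thus False using x2 y2 by linarith
      qed
      thus ?thesis using p0 by (intro exI[of _ p0]) auto
    qed
    then obtain q where q: "q \<in> {0..<pi}" "q \<notin> U" "\<bar>cos q * x + sin q * y\<bar> \<ge> a0" by blast
    have al0: "cos q * x + sin q * y \<noteq> 0" using q(3) a0 by auto
    obtain s where s: "\<bar>s\<bar> \<le> 1 / (\<bar>cos q * x + sin q * y\<bar> * (opnorm A)^2)" "phiA A (t + s) = q"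
      using preimage_exists[of A t q] H sg0 q(1) al0 unfolding x_def y_def by blast
    have "1 / (\<bar>cos q * x + sin q * y\<bar> * (opnorm A)^2) \<le> 1 / (a0 * sg^2)"
      using q(3) a0 sg1 unfolding sg_def by (intro divide_left_mono mult_right_mono mult_pos_pos) auto
    also have "\<dots> < ep" using big a0 sg1 by (simp add: field_simps)
    finally have "\<bar>s\<bar> < ep" using s(1) by linarith
    hence "t + s \<in> {t - ep<..<t + ep}" by (simp add: abs_less_iff)
    hence "t + s \<in> U" using I by blast
    hence "phiA A (t + s) \<in> U" using H by blast
    thus False using s(2) q(2) by simp
  qed
qed

end
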